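(* Let $(\Omega,\mathcal F,\mathbb P)$, $\mathnormal K$, $(\Omega_I,\mathcal F_I,\mathbb P_I)$, $\hat\Omega_I$, $\hat{\mathbb P}_I$ be as in the context, let $\{R_I: I\in\mathnormal K\}$ be events $R_I\in\mathcal F_I$ with $\mathbb P_I(R_I)>0$ for all $I$, and let $W$ be a random element of $\mathnormal K$. For $A\in\mathcal F$ define $A(I):=A\cap[W=I]$, $$\Phi_I(A):=\{\omega_1\in\hat\Omega_I:\ \mathbb P_I(A_{I,\omega_1})>0\}\times R_I,\qquad \Phi(A):=\bigcup_{I\in\mathnormal K}\Phi_I(A(I)),$$ $$\tilde\Phi(A):=\bigcup_{I\in\mathnormal K}\big[\{\omega_1\in\hat\Omega_I:\ A(I)_{I,\omega_1}\ne\emptyset\}\times R_I\big].$$ Then for each $A\in\mathcal F$, $\Phi(A)\in\mathcal F$ and $\Phi(A)\subseteq\tilde\Phi(A)$. Furthermore, if $\mathbb P(A)>0$ then $\mathbb P(\Phi(A))>0$.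
   Context: Construction of the probability space: let $\mathbf u_1,\mathbf u_2,\dots$ be an enumeration of $\mathbb Z^2$ and $\mathbf B_k:=\mathbf u_k+[-1/2,1/2]^2$. Let $N_k$ ($k\ge1$) be i.i.d. Poisson random variables of mean $1$; $U_{k,l}$ ($l\ge1$) independent random points with $U_{k,l}$ uniform in $\mathbf B_k$; and $\tau^{m,n}_{k,l}$ (for $l\ge1$, $m\ge k$, $n\ge1$, with $n>l$ when $m=k$) i.i.d. nonnegative random variables with distribution $\mathbb F$; all these collections are independent. The Poisson process consists of the points $U_{k,1},\dots,U_{k,N_k}$, $k\ge1$, and the edge $(U_{k,l},U_{m,n})$ of the Delaunay triangulation (with $m>k$, or $m=k$ and $n>l$) receives passage time $\tau^{m,n}_{k,l}$. $(\Omega,\mathcal F,\mathbb P)$ is the product over $k$ of the probability spaces $(\Omega^k,\mathcal F^k,\mathbb P^k)$ induced by $N_k$, $(U_{k,l})_l$ and $(\tau^{m,n}_{k,l})$. $\mathnormal K$ is the collection of finite sequences $I=((k_j,l_j,m_j,n_j))_{j=1,\dots,q}\in(\mathbb N^4)^q$, $q\ge1$, with pairwise distinct entries, $k_1\le\dots\le k_q$, and for each $j$ either $k_j<m_j$ or $l_j<n_j$. For $I\in\mathnormal K$, $(\Omega_I,\mathcal F_I,\mathbb P_I)$ is the probability space induced by the random vector $(\tau^{m_j,n_j}_{k_j,l_j})_{j=1,\dots,q}$ (so $\Omega_I=\mathbb R^q$), and each $\omega\in\Omega$ is written $\omega=(\omega_1,\omega_2)$ with $\omega_2\in\Omega_I$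 its $I$-coordinates and $\omega_1$ the remaining coordinates; $\hat\Omega_I:=\{\omega_1:\ \exists\,\omega_2\in\Omega_I,\ (\omega_1,\omega_2)\in\Omega\}$ with $\hat{\mathbb P}_I$ the law of $\mathbb P$ restricted to these coordinates. For $A\subseteq\Omega$ and $\omega_1\in\hat\Omega_I$, $A_{I,\omega_1}:=\{\omega_2\in\Omega_I:\ (\omega_1,\omega_2)\in A\}$. *)

theory Defs
  imports "HOL-Probability.Probability"
begin

text \<open>Index of a passage time tau^{m,n}_{k,l}: the tuple (k,l,m,n).\<close>
type_synonym tidx = "nat \<times> nat \<times> nat \<times> nat"

text \<open>Sample points: (N, U, tau) with N k = N_k, U (k,l) = U_{k,l}, tau (k,l,m,n) = tau^{m,n}_{k,l}.\<close>
type_synonym omega = "(nat \<Rightarrow> nat) \<times> ((nat \<times> nat) \<Rightarrow> real \<times> real) \<times> (tidx \<Rightarrow> real)"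

definition U_index :: "(nat \<times> nat) set" where
  "U_index = {(k, l). 1 \<le> k \<and> 1 \<le> l}"

definition tau_index :: "tidx set" where
  "tau_index = {(k, l, m, n). 1 \<le> k \<and> 1 \<le> l \<and> 1 \<le> n \<and> k \<le> m \<and> (m = k \<longrightarrow> l < n)}"

definition box_B :: "(nat \<Rightarrow> int \<times> int) \<Rightarrow> nat \<Rightarrow> (real \<times> real) set" where
  "box_B u k = cbox (of_int (fst (u k)) - 1/2, of_int (snd (u k)) - 1/2)
                    (of_int (fst (u k)) + 1/2, of_int (snd (u k)) + 1/2)"

definition Omega :: "(nat \<Rightarrow> int \<times> int) \<Rightarrow> real measure \<Rightarrow> omega measure" where
  "Omega u F =
     (\<Pi>\<^sub>M k\<in>{1..}. measure_pmf (poisson_pmf 1)) \<Otimes>\<^sub>M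
     ((\<Pi>\<^sub>M kl\<in>U_index. uniform_measure lborel (box_B u (fst kl))) \<Otimes>\<^sub>M
      (\<Pi>\<^sub>M c\<in>tau_index. F))"

definition Kset :: "tidx list set" where
  "Kset = {I. I \<noteq> [] \<and> distinct I \<and> set I \<subseteq> tau_index \<and> sorted (map fst I)}"

text \<open>(Omega_I, F_I, P_I): law of the random vector (tau_{I_j})_{j<q}, i.e. F^q on R^q.\<close>
definition PI :: "real measure \<Rightarrow> tidx list \<Rightarrow> (nat \<Rightarrow> real) measure" where
  "PI F I = (\<Pi>\<^sub>M j\<in>{..<length I}. F)"

definition split1 :: "tidx list \<Rightarrow> omega \<Rightarrow> omega" where
  "split1 I w = (fst w, fst (snd w), restrict (snd (snd w)) (tau_index - set I))"

definition split2 :: "tidx list \<Rightarrow> omega \<Rightarrow> (nat \<Rightarrow> real)" where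
  "split2 I w = (\<lambda>j\<in>{..<length I}. snd (snd w) (I ! j))"

definition glue :: "tidx list \<Rightarrow> omega \<Rightarrow> (nat \<Rightarrow> real) \<Rightarrow> omega" where
  "glue I w1 w2 = (fst w1, fst (snd w1),
     (\<lambda>c. if c \<in> set I then w2 (THE j. j < length I \<and> I ! j = c) else snd (snd w1) c))"

definition hatOmega :: "omega measure \<Rightarrow> tidx list \<Rightarrow> omega set" where
  "hatOmega M I = split1 I ` space M"

definition sect :: "real measure \<Rightarrow> tidx list \<Rightarrow> omega set \<Rightarrow> omega \<Rightarrow> (nat \<Rightarrow> real) set" where
  "sect F I A w1 = {w2 \<in> space (PI F I). glue I w1 w2 \<in> A}"

definition PhiI :: "omega measure \<Rightarrow> real measure \<Rightarrow> (tidx list \<Rightarrow> (nat \<Rightarrow> real) set)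
    \<Rightarrow> tidx list \<Rightarrow> omega set \<Rightarrow> omega set" where
  "PhiI M F R I A = (\<lambda>(w1, w2). glue I w1 w2) `
     ({w1 \<in> hatOmega M I. measure (PI F I) (sect F I A w1) > 0} \<times> R I)"

definition restrW :: "omega measure \<Rightarrow> (omega \<Rightarrow> tidx list) \<Rightarrow> omega set \<Rightarrow> tidx list \<Rightarrow> omega set" where
  "restrW M W A I = A \<inter> {w \<in> space M. W w = I}"

definition Phi :: "omega measure \<Rightarrow> real measure \<Rightarrow> (tidx list \<Rightarrow> (nat \<Rightarrow> real) set)
    \<Rightarrow> (omega \<Rightarrow> tidx list) \<Rightarrow> omega set \<Rightarrow> omega set" where
  "Phi M F R W A = (\<Union>I\<in>Kset. PhiI M F R I (restrW M W A I))"

definition Phitilde :: "omega measure \<Rightarrow> real measure \<Rightarrow> (tidx list \<Rightarrow> (nat \<Rightarrow> real) set)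
    \<Rightarrow> (omega \<Rightarrow> tidx list) \<Rightarrow> omega set \<Rightarrow> omega set" where
  "Phitilde M F R W A = (\<Union>I\<in>Kset. (\<lambda>(w1, w2). glue I w1 w2) `
     ({w1 \<in> hatOmega M I. sect F I (restrW M W A I) w1 \<noteq> {}} \<times> R I))"

end

theory Submission
  imports Defs
begin


definition idx :: "tidx list \<Rightarrow> tidx \<Rightarrow> nat" where
  "idx I c = (THE j. j < length I \<and> I ! j = c)"

definition gl :: "tidx list \<Rightarrow> (tidx \<Rightarrow> real) \<Rightarrow> (nat \<Rightarrow> real) \<Rightarrow> (tidx \<Rightarrow> real)" where
  "gl I t w2 = (\<lambda>c. if c \<in> set I then w2 (idx I c) else t c)"

lemma glue_gl: "glue I w1 w2 = (fst w1, fst (snd w1), gl I (snd (snd w1)) w2)"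
  unfolding glue_def gl_def idx_def by simp

lemma idx_nth: "distinct I \<Longrightarrow> j < length I \<Longrightarrow> idx I (I ! j) = j"
  unfolding idx_def by (rule the_equality) (auto simp: nth_eq_iff_index_eq)

lemma idx_mem: "c \<in> set I \<Longrightarrow> distinct I \<Longrightarrow> idx I c < length I \<and> I ! idx I c = c"
  by (metis idx_nth in_set_conv_nth)

lemma space_F: "sets F = sets borel \<Longrightarrow> space F = UNIV"
  by (metis sets_eq_imp_space_eq space_borel)

lemma gl_meas:
  assumes I: "I \<in> Kset" and sF: "sets F = sets borel"
  shows "(\<lambda>(t, w2). gl I t w2) \<in> measurable ((\<Pi>\<^sub>M c\<in>tau_index - set I. F) \<Otimes>\<^sub>M PI F I) (\<Pi>\<^sub>M c\<in>tau_index. F)"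
proof -
  have d: "distinct I" and sub: "set I \<subseteq> tau_index" using I by (auto simp: Kset_def)
  have eq: "(\<lambda>(t, w2). gl I t w2) = (\<lambda>p c. (if c \<in> set I then (\<lambda>p. snd p (idx I c)) else (\<lambda>p. fst p c)) p)"
    by (auto simp: gl_def fun_eq_iff)
  show ?thesis unfolding eq
  proof (rule measurable_PiM_single')
    fix c assume c: "c \<in> tau_index"
    show "(if c \<in> set I then (\<lambda>p. snd p (idx I c)) else (\<lambda>p. fst p c)) \<in> measurable ((\<Pi>\<^sub>M c\<in>tau_index - set I. F) \<Otimes>\<^sub>M PI F I) F"
    proof (cases "c \<in> set I")
      case True
      then have "idx I c < length I" using idx_mem d by blast
      then show ?thesis using True unfolding PI_def by simp
    next
      case False
      then show ?thesis using c by simp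
    qed
  next
    show "(\<lambda>\<omega> i. (if i \<in> set I then \<lambda>p. snd p (idx I i) else (\<lambda>p. fst p i)) \<omega>) \<in> space ((\<Pi>\<^sub>M c\<in>tau_index - set I. F) \<Otimes>\<^sub>M PI F I) \<rightarrow> (\<Pi>\<^sub>E i\<in>tau_index. space F)"
      using sub by (auto simp: space_pair_measure space_PiM PiE_def extensional_def space_F[OF sF])
  qed
qed

lemma gl_distr:
  assumes I: "I \<in> Kset" and sF: "sets F = sets borel" and pF: "prob_space F"
  shows "distr ((\<Pi>\<^sub>M c\<in>tau_index - set I. F) \<Otimes>\<^sub>M PI F I) (\<Pi>\<^sub>M c\<in>tau_index. F) (\<lambda>(t, w2). gl I t w2)
     = (\<Pi>\<^sub>M c\<in>tau_index. F)" (is "distr ?N ?T ?g = ?T")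
proof (rule measure_eqI_PiM_infinite[symmetric, OF refl])
  have d: "distinct I" and sub: "set I \<subseteq> tau_index" using I by (auto simp: Kset_def)
  interpret T: prob_space ?T using pF by (intro prob_space_PiM) auto
  interpret TJ: prob_space "\<Pi>\<^sub>M c\<in>tau_index - set I. F" using pF by (intro prob_space_PiM) auto
  interpret P: prob_space "PI F I" unfolding PI_def using pF by (intro prob_space_PiM) auto
  interpret TP: pair_prob_space "\<Pi>\<^sub>M c\<in>tau_index - set I. F" "PI F I" ..
  show "finite_measure ?T" by unfold_locales
  show "sets (distr ?N ?T ?g) = sets ?T" by simp
  fix J' A assume J': "finite J'" "J' \<subseteq> tau_index" and A: "\<And>i. i \<in> J' \<Longrightarrow> A i \<in> sets F"
  let ?X = "prod_emb tau_index (\<lambda>_. F) J' (Pi\<^sub>E J' A)"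
  let ?K = "{j. j < length I \<and> I ! j \<in> J'}"
  let ?Y1 = "prod_emb (tau_index - set I) (\<lambda>_. F) (J' - set I) (Pi\<^sub>E (J' - set I) A)"
  let ?Y2 = "prod_emb {..<length I} (\<lambda>_. F) ?K (\<Pi>\<^sub>E j\<in>?K. A (I ! j))"
  have sp: "space F = UNIV" using space_F[OF sF] .
  have pre: "?g -` ?X \<inter> space ?N = ?Y1 \<times> ?Y2"
  proof (intro set_eqI iffI)
    fix p assume p: "p \<in> ?g -` ?X \<inter> space ?N"
    obtain t w2 where pe: "p = (t, w2)" by force
    have t: "t \<in> space (\<Pi>\<^sub>M c\<in>tau_index - set I. F)" and w2: "w2 \<in> space (PI F I)"
      using p pe by (auto simp: space_pair_measure)
    have gX: "\<forall>i\<in>J'. gl I t w2 i \<in> A i" using p pe by (auto simp: prod_emb_def)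
    have "t \<in> ?Y1"
      using t gX by (auto simp: prod_emb_def space_PiM gl_def PiE_def extensional_def sp)
    moreover have "w2 \<in> ?Y2"
      using w2 gX d unfolding PI_def
      by (auto simp: prod_emb_def space_PiM gl_def PiE_def extensional_def sp idx_nth)
    ultimately show "p \<in> ?Y1 \<times> ?Y2" using pe by simp
  next
    fix p assume p: "p \<in> ?Y1 \<times> ?Y2"
    obtain t w2 where pe: "p = (t, w2)" by force
    have t: "t \<in> space (\<Pi>\<^sub>M c\<in>tau_index - set I. F)" and w2: "w2 \<in> space (PI F I)"
      using p pe unfolding PI_def by (auto simp: prod_emb_def space_PiM)
    have "gl I t w2 \<in> space ?T"
      using t sub by (auto simp: space_PiM gl_def PiE_def extensional_def sp)
    moreover have "\<forall>i\<in>J'. gl I t w2 i \<in> A i"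
    proof
      fix i assume i: "i \<in> J'"
      show "gl I t w2 i \<in> A i"
      proof (cases "i \<in> set I")
        case True
        then have "idx I i \<in> ?K" using idx_mem[OF True d] i by auto
        moreover have "w2 \<in> (\<Pi> j\<in>?K. A (I ! j))" using p pe by (auto simp: prod_emb_def)
        ultimately have "w2 (idx I i) \<in> A (I ! idx I i)" by blast
        then show ?thesis using True idx_mem[OF True d] by (simp add: gl_def)
      next
        case False
        then show ?thesis using i p pe by (auto simp: gl_def prod_emb_def)
      qed
    qed
    ultimately show "p \<in> ?g -` ?X \<inter> space ?N" using pe t w2
      using J' by (auto simp: prod_emb_def space_pair_measure PiE_iff sp space_PiM)
  qed
  have "emeasure (distr ?N ?T ?g) ?X = emeasure ?N (?Y1 \<times> ?Y2)"
    using J' A gl_meas[OF I sF] by (subst emeasure_distr) (auto simp: pre intro!: sets_PiM_I)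
  also have "\<dots> = emeasure (\<Pi>\<^sub>M c\<in>tau_index - set I. F) ?Y1 * emeasure (PI F I) ?Y2"
    using J' A unfolding PI_def
    by (intro P.emeasure_pair_measure_Times[unfolded PI_def] sets_PiM_I) (auto intro!: A)
  also have "emeasure (\<Pi>\<^sub>M c\<in>tau_index - set I. F) ?Y1 = (\<Prod>i\<in>J' - set I. emeasure F (A i))"
    using J' A pF by (intro emeasure_PiM_emb) auto
  also have "emeasure (PI F I) ?Y2 = (\<Prod>j\<in>?K. emeasure F (A (I ! j)))"
    unfolding PI_def using J' pF by (intro emeasure_PiM_emb) (auto intro!: A)
  also have "\<dots> = (\<Prod>i\<in>J' \<inter> set I. emeasure F (A i))"
  proof -
    have "inj_on (\<lambda>j. I ! j) ?K" using d by (auto simp: inj_on_def nth_eq_iff_index_eq)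
    moreover have "(\<lambda>j. I ! j) ` ?K = J' \<inter> set I"
    proof
      show "(\<lambda>j. I ! j) ` ?K \<subseteq> J' \<inter> set I" by auto
      show "J' \<inter> set I \<subseteq> (\<lambda>j. I ! j) ` ?K"
      proof
        fix c assume c: "c \<in> J' \<inter> set I"
        then have "idx I c \<in> ?K" "c = I ! idx I c" using idx_mem[of c I] d by auto
        then show "c \<in> (\<lambda>j. I ! j) ` ?K" by blast
      qed
    qed
    ultimately show ?thesis by (metis (no_types, lifting) prod.reindex_cong)
  qed
  also have "(\<Prod>i\<in>J' - set I. emeasure F (A i)) * (\<Prod>i\<in>J' \<inter> set I. emeasure F (A i))
      = (\<Prod>i\<in>J'. emeasure F (A i))"
    using J' by (metis (no_types) Int_Diff_Un Int_Diff_disjoint finite_Diff finite_Int mult.commute prod.union_disjoint)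
  also have "\<dots> = emeasure ?T ?X"
    using J' A pF by (intro emeasure_PiM_emb[symmetric]) auto
  finally show "emeasure ?T ?X = emeasure (distr ?N ?T ?g) ?X" by simp
qed


abbreviation "A0 \<equiv> (\<Pi>\<^sub>M k\<in>{1::nat..}. measure_pmf (poisson_pmf 1))"
abbreviation "B0 u \<equiv> (\<Pi>\<^sub>M kl\<in>U_index. uniform_measure lborel (box_B u (fst kl)))"
abbreviation "TT F \<equiv> (\<Pi>\<^sub>M c\<in>tau_index. F)"
abbreviation "TJ F I \<equiv> (\<Pi>\<^sub>M c\<in>tau_index - set I. F)"
abbreviation "M1 u F I \<equiv> A0 \<Otimes>\<^sub>M (B0 u \<Otimes>\<^sub>M TJ F I)"

lemma Omega_eq: "Omega u F = A0 \<Otimes>\<^sub>M (B0 u \<Otimes>\<^sub>M TT F)"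
  unfolding Omega_def ..

lemma box_measure: "emeasure lborel (box_B u k) = 1"
  by (simp add: box_B_def emeasure_lborel_cbox_eq Basis_prod_def inner_prod_def)

lemma prob_A0: "prob_space A0"
  by (intro prob_space_PiM prob_space_measure_pmf)

lemma prob_B0: "prob_space (B0 u)"
  by (intro prob_space_PiM prob_space_uniform_measure) (simp_all add: box_measure)

lemma prob_TT: "prob_space F \<Longrightarrow> prob_space (TT F)"
  by (intro prob_space_PiM)

lemma prob_TJ: "prob_space F \<Longrightarrow> prob_space (TJ F I)"
  by (intro prob_space_PiM)

lemma prob_PI: "prob_space F \<Longrightarrow> prob_space (PI F I)"
  unfolding PI_def by (intro prob_space_PiM)

lemma glue_meas:
  assumes I: "I \<in> Kset" and sF: "sets F = sets borel"
  shows "(\<lambda>(w1, w2). glue I w1 w2) \<in> measurable (M1 u F I \<Otimes>\<^sub>M PI F I) (Omega u F)"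
proof -
  have eq: "(\<lambda>(w1, w2). glue I w1 w2) = (\<lambda>p. (fst (fst p), fst (snd (fst p)), (\<lambda>(t, w2). gl I t w2) (snd (snd (fst p)), snd p)))"
    by (auto simp: glue_gl fun_eq_iff)
  have g: "(\<lambda>(t, w2). gl I t w2) \<in> measurable (TJ F I \<Otimes>\<^sub>M PI F I) (TT F)" using gl_meas[OF I sF] .
  show ?thesis unfolding eq Omega_eq
    by (intro measurable_Pair measurable_compose[OF _ g]) auto
qed


lemma key_int:
  assumes I: "I \<in> Kset" and sF: "sets F = sets borel" and pF: "prob_space F"
    and f: "f \<in> borel_measurable (Omega u F)"
  shows "(\<integral>\<^sup>+ w. f w \<partial>Omega u F) = (\<integral>\<^sup>+ w1. (\<integral>\<^sup>+ w2. f (glue I w1 w2) \<partial>PI F I) \<partial>M1 u F I)"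
proof -
  interpret A0: prob_space A0 by (rule prob_A0)
  interpret B0: prob_space "B0 u" by (rule prob_B0)
  interpret T: prob_space "TT F" using pF by (rule prob_TT)
  interpret TJ: prob_space "TJ F I" using pF by (rule prob_TJ)
  interpret P: prob_space "PI F I" using pF by (rule prob_PI)
  interpret BT: prob_space "B0 u \<Otimes>\<^sub>M TT F" by (intro prob_space_pair prob_B0 prob_TT pF)
  interpret BTJ: prob_space "B0 u \<Otimes>\<^sub>M TJ F I" by (intro prob_space_pair prob_B0 prob_TJ pF)
  have f': "f \<in> borel_measurable (A0 \<Otimes>\<^sub>M (B0 u \<Otimes>\<^sub>M TT F))" using f by (simp add: Omega_eq)
  have gm: "(\<lambda>(w1, w2). glue I w1 w2) \<in> measurable (M1 u F I \<Otimes>\<^sub>M PI F I) (Omega u F)"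
    by (rule glue_meas[OF I sF])
  have glm: "(\<lambda>(t, w2). gl I t w2) \<in> measurable (TJ F I \<Otimes>\<^sub>M PI F I) (TT F)" by (rule gl_meas[OF I sF])
  have G: "(\<lambda>p. f (glue I (fst p) (snd p))) \<in> borel_measurable (M1 u F I \<Otimes>\<^sub>M PI F I)"
    using measurable_comp[OF gm f] by (simp add: comp_def case_prod_beta)
  have Gm: "(\<lambda>w1. \<integral>\<^sup>+ w2. f (glue I w1 w2) \<partial>PI F I) \<in> borel_measurable (M1 u F I)"
    using P.borel_measurable_nn_integral[of "\<lambda>w1 w2. f (glue I w1 w2)"] G by (simp add: case_prod_beta')
  have inner: "(\<integral>\<^sup>+ t. f (a, b, t) \<partial>TT F) = (\<integral>\<^sup>+ tJ. \<integral>\<^sup>+ w2. f (glue I (a, b, tJ) w2) \<partial>PI F I \<partial>TJ F I)"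
    if a: "a \<in> space A0" and b: "b \<in> space (B0 u)" for a b
  proof -
    have fab: "(\<lambda>t. f (a, b, t)) \<in> borel_measurable (TT F)"
      using f' a b by (auto intro!: measurable_compose_Pair1[of a] measurable_compose_Pair1[of b] 
        simp: space_pair_measure)
    have "(\<integral>\<^sup>+ t. f (a, b, t) \<partial>TT F) = (\<integral>\<^sup>+ t. f (a, b, t) \<partial>distr (TJ F I \<Otimes>\<^sub>M PI F I) (TT F) (\<lambda>(t, w2). gl I t w2))"
      by (simp add: gl_distr[OF I sF pF])
    also have "\<dots> = (\<integral>\<^sup>+ p. f (a, b, (\<lambda>(t, w2). gl I t w2) p) \<partial>(TJ F I \<Otimes>\<^sub>M PI F I))"
      using fab glm by (intro nn_integral_distr) auto
    also have "\<dots> = (\<integral>\<^sup>+ tJ. \<integral>\<^sup>+ w2. f (a, b, gl I tJ w2) \<partial>PI F I \<partial>TJ F I)"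
    proof -
      have m: "(\<lambda>p. f (a, b, (\<lambda>(t, w2). gl I t w2) p)) \<in> borel_measurable (TJ F I \<Otimes>\<^sub>M PI F I)"
        using measurable_comp[OF glm fab] by (simp add: comp_def)
      show ?thesis by (subst P.nn_integral_fst[OF m, symmetric]) simp
    qed
    finally show ?thesis by (simp add: glue_gl)
  qed
  have "(\<integral>\<^sup>+ w. f w \<partial>Omega u F) = (\<integral>\<^sup>+ a. \<integral>\<^sup>+ x. f (a, x) \<partial>(B0 u \<Otimes>\<^sub>M TT F) \<partial>A0)"
    unfolding Omega_eq using f' by (intro BT.nn_integral_fst[symmetric])
  also have "\<dots> = (\<integral>\<^sup>+ a. \<integral>\<^sup>+ b. \<integral>\<^sup>+ tJ. \<integral>\<^sup>+ w2. f (glue I (a, b, tJ) w2) \<partial>PI F I \<partial>TJ F I \<partial>B0 u \<partial>A0)"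
  proof (intro nn_integral_cong)
    fix a assume a: "a \<in> space A0"
    have fa: "(\<lambda>x. f (a, x)) \<in> borel_measurable (B0 u \<Otimes>\<^sub>M TT F)"
      using f' a by (rule measurable_compose_Pair1[rotated])
    have "(\<integral>\<^sup>+ x. f (a, x) \<partial>(B0 u \<Otimes>\<^sub>M TT F)) = (\<integral>\<^sup>+ b. \<integral>\<^sup>+ t. f (a, b, t) \<partial>TT F \<partial>B0 u)"
      using fa by (intro T.nn_integral_fst[symmetric])
    also have "\<dots> = (\<integral>\<^sup>+ b. \<integral>\<^sup>+ tJ. \<integral>\<^sup>+ w2. f (glue I (a, b, tJ) w2) \<partial>PI F I \<partial>TJ F I \<partial>B0 u)"
      using a by (intro nn_integral_cong inner) auto
    finally show "(\<integral>\<^sup>+ x. f (a, x) \<partial>(B0 u \<Otimes>\<^sub>M TT F)) = \<dots>" .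
  qed
  also have "\<dots> = (\<integral>\<^sup>+ a. \<integral>\<^sup>+ x. (\<integral>\<^sup>+ w2. f (glue I (a, x) w2) \<partial>PI F I) \<partial>(B0 u \<Otimes>\<^sub>M TJ F I) \<partial>A0)"
  proof (intro nn_integral_cong)
    fix a assume a: "a \<in> space A0"
    have "(\<lambda>x. \<integral>\<^sup>+ w2. f (glue I (a, x) w2) \<partial>PI F I) \<in> borel_measurable (B0 u \<Otimes>\<^sub>M TJ F I)"
      using Gm a by (rule measurable_compose_Pair1[rotated])
    then show "(\<integral>\<^sup>+ b. \<integral>\<^sup>+ tJ. \<integral>\<^sup>+ w2. f (glue I (a, b, tJ) w2) \<partial>PI F I \<partial>TJ F I \<partial>B0 u)
      = (\<integral>\<^sup>+ x. (\<integral>\<^sup>+ w2. f (glue I (a, x) w2) \<partial>PI F I) \<partial>(B0 u \<Otimes>\<^sub>M TJ F I))"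
      using TJ.nn_integral_fst[of "\<lambda>x. \<integral>\<^sup>+ w2. f (glue I (a, x) w2) \<partial>PI F I" "B0 u"] by simp
  qed
  also have "\<dots> = (\<integral>\<^sup>+ w1. (\<integral>\<^sup>+ w2. f (glue I w1 w2) \<partial>PI F I) \<partial>M1 u F I)"
    using Gm by (intro BTJ.nn_integral_fst)
  finally show ?thesis .
qed


lemma space_Omega: "sets F = sets borel \<Longrightarrow> space (Omega u F) =
   (\<Pi>\<^sub>E k\<in>{1::nat..}. UNIV) \<times> ((\<Pi>\<^sub>E kl\<in>U_index. UNIV) \<times> (\<Pi>\<^sub>E c\<in>tau_index. UNIV))"
  by (simp add: Omega_eq space_pair_measure space_PiM space_F)

lemma space_M1: "sets F = sets borel \<Longrightarrow> space (M1 u F I) =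
   (\<Pi>\<^sub>E k\<in>{1::nat..}. UNIV) \<times> ((\<Pi>\<^sub>E kl\<in>U_index. UNIV) \<times> (\<Pi>\<^sub>E c\<in>tau_index - set I. UNIV))"
  by (simp add: space_pair_measure space_PiM space_F)

lemma space_PI: "sets F = sets borel \<Longrightarrow> space (PI F I) = (\<Pi>\<^sub>E j\<in>{..<length I}. UNIV)"
  by (simp add: PI_def space_PiM space_F)

lemma split_glue:
  assumes I: "I \<in> Kset" and sF: "sets F = sets borel"
    and w1: "w1 \<in> space (M1 u F I)" and w2: "w2 \<in> space (PI F I)"
  shows "glue I w1 w2 \<in> space (Omega u F)" "split1 I (glue I w1 w2) = w1" "split2 I (glue I w1 w2) = w2"
proof -
  have d: "distinct I" and sub: "set I \<subseteq> tau_index" using I by (auto simp: Kset_def)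
  obtain a b t where w1e: "w1 = (a, b, t)" by (cases w1) auto
  have a: "a \<in> (\<Pi>\<^sub>E k\<in>{1::nat..}. UNIV)" and b: "b \<in> (\<Pi>\<^sub>E kl\<in>U_index. UNIV)"
    and t: "t \<in> (\<Pi>\<^sub>E c\<in>tau_index - set I. UNIV)" using w1 unfolding space_M1[OF sF] w1e by simp_all
  have w2': "w2 \<in> (\<Pi>\<^sub>E j\<in>{..<length I}. UNIV)" using w2 by (simp add: space_PI[OF sF])
  have "gl I t w2 \<in> (\<Pi>\<^sub>E c\<in>tau_index. UNIV)" using t sub by (auto simp: gl_def PiE_def extensional_def)
  then show "glue I w1 w2 \<in> space (Omega u F)" using a b w1e by (simp add: space_Omega[OF sF] glue_gl)
  have "restrict (gl I t w2) (tau_index - set I) = t"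
    using t by (auto simp: gl_def fun_eq_iff PiE_def extensional_def)
  then show "split1 I (glue I w1 w2) = w1" using w1e by (simp add: split1_def glue_gl)
  have "(\<lambda>j\<in>{..<length I}. gl I t w2 (I ! j)) = w2"
    using w2' d by (auto simp: gl_def fun_eq_iff PiE_def extensional_def idx_nth)
  then show "split2 I (glue I w1 w2) = w2" using w1e by (simp add: split2_def glue_gl)
qed

lemma glue_split:
  assumes I: "I \<in> Kset" and sF: "sets F = sets borel" and w: "w \<in> space (Omega u F)"
  shows "glue I (split1 I w) (split2 I w) = w" "split1 I w \<in> space (M1 u F I)" "split2 I w \<in> space (PI F I)"
proof -
  have d: "distinct I" and sub: "set I \<subseteq> tau_index" using I by (auto simp: Kset_def)
  obtain a b t where we: "w = (a, b, t)" by (cases w) auto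
  have a: "a \<in> (\<Pi>\<^sub>E k\<in>{1::nat..}. UNIV)" and b: "b \<in> (\<Pi>\<^sub>E kl\<in>U_index. UNIV)"
    and t: "t \<in> (\<Pi>\<^sub>E c\<in>tau_index. UNIV)" using w we by (auto simp: space_Omega[OF sF])
  have "gl I (restrict t (tau_index - set I)) (\<lambda>j\<in>{..<length I}. t (I ! j)) = t"
  proof
    fix c show "gl I (restrict t (tau_index - set I)) (\<lambda>j\<in>{..<length I}. t (I ! j)) c = t c"
    proof (cases "c \<in> set I")
      case True then show ?thesis using idx_mem[OF True d] by (simp add: gl_def)
    next
      case False
      have "c \<notin> tau_index \<Longrightarrow> t c = undefined" using t by (metis PiE_arb)
      then show ?thesis using False by (auto simp: gl_def)
    qed
  qed
  then show "glue I (split1 I w) (split2 I w) = w" using we by (simp add: glue_gl split1_def split2_def)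
  show "split1 I w \<in> space (M1 u F I)" unfolding space_M1[OF sF] using a b we by (simp add: split1_def)
  show "split2 I w \<in> space (PI F I)" by (simp add: space_PI[OF sF] split2_def)
qed

lemma hatOmega_eq:
  assumes I: "I \<in> Kset" and sF: "sets F = sets borel"
  shows "hatOmega (Omega u F) I = space (M1 u F I)"
proof
  show "hatOmega (Omega u F) I \<subseteq> space (M1 u F I)"
    unfolding hatOmega_def using glue_split[OF I sF] by auto
  show "space (M1 u F I) \<subseteq> hatOmega (Omega u F) I"
  proof
    fix w1 assume w1: "w1 \<in> space (M1 u F I)"
    have w2: "(\<lambda>j\<in>{..<length I}. 0) \<in> space (PI F I)" by (simp add: space_PI[OF sF])
    show "w1 \<in> hatOmega (Omega u F) I"
      unfolding hatOmega_def using split_glue[OF I sF w1 w2] by (metis image_eqI)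
  qed
qed

lemma split_meas:
  assumes I: "I \<in> Kset" and sF: "sets F = sets borel"
  shows "split1 I \<in> measurable (Omega u F) (M1 u F I)" "split2 I \<in> measurable (Omega u F) (PI F I)"
proof -
  have sub: "set I \<subseteq> tau_index" using I by (auto simp: Kset_def)
  have r: "(\<lambda>t. restrict t (tau_index - set I)) \<in> measurable (TT F) (TJ F I)"
    by (rule measurable_restrict_subset) auto
  have f1: "(\<lambda>w. snd (snd w)) \<in> measurable (A0 \<Otimes>\<^sub>M (B0 u \<Otimes>\<^sub>M TT F)) (TT F)"
    by (rule measurable_compose[OF measurable_snd measurable_snd])
  have f2: "(\<lambda>w. fst (snd w)) \<in> measurable (A0 \<Otimes>\<^sub>M (B0 u \<Otimes>\<^sub>M TT F)) (B0 u)"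
    by (rule measurable_compose[OF measurable_snd measurable_fst])
  have "(\<lambda>w. (fst w, fst (snd w), restrict (snd (snd w)) (tau_index - set I))) \<in> measurable (A0 \<Otimes>\<^sub>M (B0 u \<Otimes>\<^sub>M TT F)) (M1 u F I)"
    apply (rule measurable_Pair)
     apply (rule measurable_fst)
    apply (rule measurable_Pair)
     apply (rule f2)
    apply (rule measurable_compose[OF f1 r])
    done
  then show "split1 I \<in> measurable (Omega u F) (M1 u F I)"
    unfolding split1_def Omega_eq .
  have c: "(\<lambda>w. snd (snd w) (I ! j)) \<in> measurable (Omega u F) F" if "j < length I" for j
  proof -
    have "I ! j \<in> tau_index" using that sub by auto
    then have "(\<lambda>t. t (I ! j)) \<in> measurable (TT F) F" by (rule measurable_component_singleton)
    from measurable_compose[OF f1 this] show ?thesis unfolding Omega_eq .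
  qed
  show "split2 I \<in> measurable (Omega u F) (PI F I)"
    unfolding split2_def PI_def by (rule measurable_restrict) (use c in simp)
qed



lemma sect_emeasure:
  assumes I: "I \<in> Kset" and sF: "sets F = sets borel"
    and B: "B \<in> sets (Omega u F)" and w1: "w1 \<in> space (M1 u F I)"
  shows "sect F I B w1 \<in> sets (PI F I)"
    "emeasure (PI F I) (sect F I B w1) = (\<integral>\<^sup>+ w2. indicator B (glue I w1 w2) \<partial>PI F I)"
proof -
  have gm1: "(\<lambda>w2. glue I w1 w2) \<in> measurable (PI F I) (Omega u F)"
    using measurable_compose_Pair1[OF w1 glue_meas[OF I sF]] by simp
  have eq: "sect F I B w1 = (\<lambda>w2. glue I w1 w2) -` B \<inter> space (PI F I)" by (auto simp: sect_def)
  show S: "sect F I B w1 \<in> sets (PI F I)" unfolding eq using measurable_sets[OF gm1 B] .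
  have "emeasure (PI F I) (sect F I B w1) = (\<integral>\<^sup>+ w2. indicator (sect F I B w1) w2 \<partial>PI F I)"
    using S by simp
  also have "\<dots> = (\<integral>\<^sup>+ w2. indicator B (glue I w1 w2) \<partial>PI F I)"
    by (intro nn_integral_cong) (auto simp: eq indicator_def)
  finally show "emeasure (PI F I) (sect F I B w1) = (\<integral>\<^sup>+ w2. indicator B (glue I w1 w2) \<partial>PI F I)" .
qed

lemma emeasure_key:
  assumes I: "I \<in> Kset" and sF: "sets F = sets borel" and pF: "prob_space F"
    and B: "B \<in> sets (Omega u F)"
  shows "emeasure (Omega u F) B = (\<integral>\<^sup>+ w1. emeasure (PI F I) (sect F I B w1) \<partial>M1 u F I)"
proof -
  have "emeasure (Omega u F) B = (\<integral>\<^sup>+ w. indicator B w \<partial>Omega u F)" using B by simp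
  also have "\<dots> = (\<integral>\<^sup>+ w1. (\<integral>\<^sup>+ w2. indicator B (glue I w1 w2) \<partial>PI F I) \<partial>M1 u F I)"
    using B by (intro key_int[OF I sF pF]) simp
  also have "\<dots> = (\<integral>\<^sup>+ w1. emeasure (PI F I) (sect F I B w1) \<partial>M1 u F I)"
    by (intro nn_integral_cong) (simp add: sect_emeasure[OF I sF B])
  finally show ?thesis .
qed

lemma sect_meas:
  assumes I: "I \<in> Kset" and sF: "sets F = sets borel" and pF: "prob_space F"
    and B: "B \<in> sets (Omega u F)"
  shows "(\<lambda>w1. emeasure (PI F I) (sect F I B w1)) \<in> borel_measurable (M1 u F I)"
proof -
  interpret P: prob_space "PI F I" using pF by (rule prob_PI)
  have gm: "(\<lambda>(w1, w2). glue I w1 w2) \<in> measurable (M1 u F I \<Otimes>\<^sub>M PI F I) (Omega u F)"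
    by (rule glue_meas[OF I sF])
  have G: "(\<lambda>p. indicator B (glue I (fst p) (snd p)) :: ennreal) \<in> borel_measurable (M1 u F I \<Otimes>\<^sub>M PI F I)"
    using measurable_comp[OF gm borel_measurable_indicator[OF B]] by (simp add: comp_def case_prod_beta)
  have Gm: "(\<lambda>w1. \<integral>\<^sup>+ w2. indicator B (glue I w1 w2) \<partial>PI F I) \<in> borel_measurable (M1 u F I)"
    using P.borel_measurable_nn_integral[of "\<lambda>w1 w2. indicator B (glue I w1 w2)"] G by (simp add: case_prod_beta')
  show ?thesis
    by (rule measurable_cong[THEN iffD2, OF _ Gm]) (simp add: sect_emeasure[OF I sF B])
qed

lemma S_sets:
  assumes I: "I \<in> Kset" and sF: "sets F = sets borel" and pF: "prob_space F"
    and B: "B \<in> sets (Omega u F)"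
  shows "{w1 \<in> space (M1 u F I). 0 < measure (PI F I) (sect F I B w1)} \<in> sets (M1 u F I)"
proof -
  have [measurable]: "(\<lambda>w1. measure (PI F I) (sect F I B w1)) \<in> borel_measurable (M1 u F I)"
    unfolding measure_def using sect_meas[OF I sF pF B] by measurable
  show ?thesis by measurable
qed

lemma PhiI_eq:
  assumes I: "I \<in> Kset" and sF: "sets F = sets borel" and R: "R I \<subseteq> space (PI F I)"
  shows "PhiI (Omega u F) F R I B = {w \<in> space (Omega u F).
     split1 I w \<in> {w1 \<in> space (M1 u F I). 0 < measure (PI F I) (sect F I B w1)} \<and> split2 I w \<in> R I}"
    (is "_ = ?Y")
proof
  show "PhiI (Omega u F) F R I B \<subseteq> ?Y"
  proof
    fix x assume "x \<in> PhiI (Omega u F) F R I B"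
    then obtain w1 w2 where x: "x = glue I w1 w2" and w1: "w1 \<in> space (M1 u F I)"
      and m: "0 < measure (PI F I) (sect F I B w1)" and w2: "w2 \<in> R I"
      unfolding PhiI_def hatOmega_eq[OF I sF] by auto
    have w2': "w2 \<in> space (PI F I)" using w2 R by auto
    show "x \<in> ?Y" using split_glue[OF I sF w1 w2'] x w1 m w2 by simp
  qed
  show "?Y \<subseteq> PhiI (Omega u F) F R I B"
  proof
    fix w assume w: "w \<in> ?Y"
    then have "w = (\<lambda>(w1, w2). glue I w1 w2) (split1 I w, split2 I w)"
      using glue_split(1)[OF I sF, where u=u and w=w] by simp
    moreover have "(split1 I w, split2 I w) \<in> {w1 \<in> hatOmega (Omega u F) I. measure (PI F I) (sect F I B w1) > 0} \<times> R I"
      using w unfolding hatOmega_eq[OF I sF] by auto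
    ultimately show "w \<in> PhiI (Omega u F) F R I B" unfolding PhiI_def by blast
  qed
qed


lemma PhiI_emeasure:
  assumes I: "I \<in> Kset" and sF: "sets F = sets borel" and pF: "prob_space F"
    and R: "R I \<in> sets (PI F I)" and B: "B \<in> sets (Omega u F)"
  shows "PhiI (Omega u F) F R I B \<in> sets (Omega u F)"
    "emeasure (Omega u F) (PhiI (Omega u F) F R I B) =
     emeasure (M1 u F I) {w1 \<in> space (M1 u F I). 0 < measure (PI F I) (sect F I B w1)} * emeasure (PI F I) (R I)"
proof -
  let ?S = "{w1 \<in> space (M1 u F I). 0 < measure (PI F I) (sect F I B w1)}"
  have Rs: "R I \<subseteq> space (PI F I)" using R by (rule sets.sets_into_space)
  have S: "?S \<in> sets (M1 u F I)" by (rule S_sets[OF I sF pF B])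
  have eq: "PhiI (Omega u F) F R I B = (split1 I -` ?S \<inter> space (Omega u F)) \<inter> (split2 I -` R I \<inter> space (Omega u F))"
    unfolding PhiI_eq[where R=R and u=u and B=B, OF I sF Rs] by auto
  show Y: "PhiI (Omega u F) F R I B \<in> sets (Omega u F)"
    unfolding eq by (rule sets.Int[OF measurable_sets[OF split_meas(1)[OF I sF] S] measurable_sets[OF split_meas(2)[OF I sF] R]])
  have sect: "sect F I (PhiI (Omega u F) F R I B) w1 = (if w1 \<in> ?S then R I else {})"
    if w1: "w1 \<in> space (M1 u F I)" for w1
  proof -
    have "sect F I (PhiI (Omega u F) F R I B) w1 = {w2 \<in> space (PI F I). w1 \<in> ?S \<and> w2 \<in> R I}"
      unfolding sect_def PhiI_eq[where R=R and u=u and B=B, OF I sF Rs] using split_glue[OF I sF w1] by auto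
    then show ?thesis using Rs by auto
  qed
  have "emeasure (Omega u F) (PhiI (Omega u F) F R I B) =
     (\<integral>\<^sup>+ w1. emeasure (PI F I) (sect F I (PhiI (Omega u F) F R I B) w1) \<partial>M1 u F I)"
    by (rule emeasure_key[OF I sF pF Y])
  also have "\<dots> = (\<integral>\<^sup>+ w1. indicator ?S w1 * emeasure (PI F I) (R I) \<partial>M1 u F I)"
    by (intro nn_integral_cong) (simp add: sect indicator_def)
  also have "\<dots> = emeasure (M1 u F I) ?S * emeasure (PI F I) (R I)"
    using S by (simp add: nn_integral_multc)
  finally show "emeasure (Omega u F) (PhiI (Omega u F) F R I B) = emeasure (M1 u F I) ?S * emeasure (PI F I) (R I)" .
qed



lemma countable_Kset: "countable Kset"
  by (rule countable_subset[OF subset_UNIV]) simp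

theorem lemma1:
  fixes u :: "nat \<Rightarrow> int \<times> int" and F :: "real measure"
    and R :: "tidx list \<Rightarrow> (nat \<Rightarrow> real) set" and W :: "omega \<Rightarrow> tidx list"
    and A :: "omega set"
  assumes "bij_betw u {1..} UNIV"
    and "prob_space F" and "sets F = sets borel" and "AE x in F. 0 \<le> x"
    and "\<forall>I\<in>Kset. R I \<in> sets (PI F I) \<and> measure (PI F I) (R I) > 0"
    and "W \<in> measurable (Omega u F) (count_space Kset)"
    and "A \<in> sets (Omega u F)"
  shows "Phi (Omega u F) F R W A \<in> sets (Omega u F)
    \<and> Phi (Omega u F) F R W A \<subseteq> Phitilde (Omega u F) F R W A
    \<and> (measure (Omega u F) A > 0 \<longrightarrow> measure (Omega u F) (Phi (Omega u F) F R W A) > 0)"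
proof -
  note pF = assms(2) and sF = assms(3) and RI = assms(5) and Wm = assms(6) and A = assms(7)
  interpret Om: prob_space "Omega u F" unfolding Omega_eq
    by (intro prob_space_pair prob_A0 prob_B0 prob_TT pF)
  have AI: "restrW (Omega u F) W A I \<in> sets (Omega u F)" if I: "I \<in> Kset" for I
  proof -
    have "{w \<in> space (Omega u F). W w = I} = W -` {I} \<inter> space (Omega u F)" by auto
    moreover have "W -` {I} \<inter> space (Omega u F) \<in> sets (Omega u F)"
      using measurable_sets[OF Wm, of "{I}"] I by simp
    ultimately show ?thesis unfolding restrW_def using A by auto
  qed
  have PhiIs: "PhiI (Omega u F) F R I (restrW (Omega u F) W A I) \<in> sets (Omega u F)" if I: "I \<in> Kset" for I
    using PhiI_emeasure(1)[OF I sF pF _ AI[OF I]] RI I by auto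
  have P1: "Phi (Omega u F) F R W A \<in> sets (Omega u F)"
    unfolding Phi_def by (intro sets.countable_UN'' countable_Kset PhiIs)
  have P2: "Phi (Omega u F) F R W A \<subseteq> Phitilde (Omega u F) F R W A"
    unfolding Phi_def Phitilde_def PhiI_def
  proof (rule UN_mono[OF subset_refl])
    fix I assume "I \<in> Kset"
    have "{w1 \<in> hatOmega (Omega u F) I. 0 < measure (PI F I) (sect F I (restrW (Omega u F) W A I) w1)}
       \<subseteq> {w1 \<in> hatOmega (Omega u F) I. sect F I (restrW (Omega u F) W A I) w1 \<noteq> {}}"
      by (rule Collect_mono) auto
    then show "(\<lambda>(w1, w2). glue I w1 w2) ` ({w1 \<in> hatOmega (Omega u F) I. 0 < measure (PI F I) (sect F I (restrW (Omega u F) W A I) w1)} \<times> R I)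
      \<subseteq> (\<lambda>(w1, w2). glue I w1 w2) ` ({w1 \<in> hatOmega (Omega u F) I. sect F I (restrW (Omega u F) W A I) w1 \<noteq> {}} \<times> R I)"
      by (intro image_mono Sigma_mono) auto
  qed
  have P3: "measure (Omega u F) (Phi (Omega u F) F R W A) > 0" if pos: "measure (Omega u F) A > 0"
  proof -
    have Aeq: "A = (\<Union>I\<in>Kset. restrW (Omega u F) W A I)"
    proof -
      have WK: "W w \<in> Kset" if "w \<in> space (Omega u F)" for w
        using measurable_space[OF Wm that] by simp
      show ?thesis
      proof (rule set_eqI)
        fix w show "w \<in> A \<longleftrightarrow> w \<in> (\<Union>I\<in>Kset. restrW (Omega u F) W A I)"
        proof
          assume w: "w \<in> A"
          then have ws: "w \<in> space (Omega u F)" using sets.sets_into_space[OF A] by blast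
          show "w \<in> (\<Union>I\<in>Kset. restrW (Omega u F) W A I)"
            using w ws WK[OF ws] unfolding restrW_def by (intro UN_I[of "W w"]) auto
        next
          assume "w \<in> (\<Union>I\<in>Kset. restrW (Omega u F) W A I)"
          then show "w \<in> A" unfolding restrW_def by auto
        qed
      qed
    qed
    have "\<exists>I\<in>Kset. emeasure (Omega u F) (restrW (Omega u F) W A I) \<noteq> 0"
    proof (rule ccontr)
      assume "\<not> ?thesis"
      then have "(\<Union>I\<in>Kset. restrW (Omega u F) W A I) \<in> null_sets (Omega u F)"
        by (intro null_sets_UN'[OF countable_Kset]) (simp add: null_sets_def AI)
      then have "A \<in> null_sets (Omega u F)" by (subst Aeq)
      then have "emeasure (Omega u F) A = 0" by (rule null_setsD1)
      then show False using pos by (simp add: Om.emeasure_eq_measure)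
    qed
    then obtain I where I: "I \<in> Kset" and ne: "emeasure (Omega u F) (restrW (Omega u F) W A I) \<noteq> 0" by blast
    let ?B = "restrW (Omega u F) W A I"
    let ?S = "{w1 \<in> space (M1 u F I). 0 < measure (PI F I) (sect F I ?B w1)}"
    interpret P: prob_space "PI F I" using pF by (rule prob_PI)
    have "(\<integral>\<^sup>+ w1. emeasure (PI F I) (sect F I ?B w1) \<partial>M1 u F I) \<noteq> 0"
      using ne emeasure_key[OF I sF pF AI[OF I]] by simp
    then have "\<not> (AE w1 in M1 u F I. emeasure (PI F I) (sect F I ?B w1) = 0)"
      using nn_integral_0_iff_AE[OF sect_meas[OF I sF pF AI[OF I]]] by simp
    moreover have "{w1 \<in> space (M1 u F I). \<not> emeasure (PI F I) (sect F I ?B w1) = 0} = ?S"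
    proof -
      have "emeasure (PI F I) X = 0 \<longleftrightarrow> \<not> 0 < measure (PI F I) X" for X
        by (simp add: P.emeasure_eq_measure less_le)
      then show ?thesis by blast
    qed
    ultimately have Sne: "emeasure (M1 u F I) ?S \<noteq> 0"
      using AE_iff_measurable[OF S_sets[OF I sF pF AI[OF I]], of "\<lambda>w1. emeasure (PI F I) (sect F I ?B w1) = 0"]
      by simp
    have RIs: "R I \<in> sets (PI F I)" and RIp: "measure (PI F I) (R I) > 0" using RI I by auto
    have "emeasure (PI F I) (R I) \<noteq> 0" using RIp by (simp add: P.emeasure_eq_measure)
    then have "emeasure (Omega u F) (PhiI (Omega u F) F R I ?B) \<noteq> 0"
      using Sne PhiI_emeasure(2)[where R=R and u=u, OF I sF pF RIs AI[OF I]] by simp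
    then have "measure (Omega u F) (PhiI (Omega u F) F R I ?B) > 0"
      by (simp add: Om.emeasure_eq_measure less_le)
    also have "measure (Omega u F) (PhiI (Omega u F) F R I ?B) \<le> measure (Omega u F) (Phi (Omega u F) F R W A)"
    proof (rule Om.finite_measure_mono[OF _ P1])
      show "PhiI (Omega u F) F R I ?B \<subseteq> Phi (Omega u F) F R W A"
        unfolding Phi_def using I by (rule UN_upper)
    qed
    finally show ?thesis .
  qed
  show ?thesis using P1 P2 P3 by blast
qed

end
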